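(* Let $N\ge 2$ be an integer and $\kappa,m>0$. For every fixed $k_1\in\mathbb{Z}\cap(0,N)$, $$\sum_{\substack{k_2,k_3,k_4\in\mathbb{Z}\cap(0,N)\\ k_1-k_2-k_3-k_4\equiv 0\ (\mathrm{mod}\ N)}}\big|A^{(1)}_{1,2,3,4}\big|^2\le C\,N^2,$$ with $C>0$ depending only on $\kappa,m$.
   Context: For an integer $N\ge 2$ and constants $\kappa,m>0$, define for $k\in\mathbb{Z}$ the frequency $\omega_k=2\sqrt{\kappa/m}\,\big|\sin(\pi k/N)\big|$ and the $2N$-periodic sign function $\iota(x)=\operatorname{sgn}\sin(\pi x/N)$. For integers $k_1,k_2,k_3,k_4$ set $$T_{1,2,3,4}=-\frac{3}{4\kappa^2}\,\iota(k_2+k_3+k_4)\,\iota(k_2)\,\iota(k_3)\,\iota(k_4)\prod_{i=1}^4\sqrt{\omega_{k_i}},\qquad A^{(1)}_{1,2,3,4}=-\frac{T_{1,2,3,4}}{\omega_{k_1}-\omega_{k_2}-\omega_{k_3}-\omega_{k_4}}.$$ On the summation range (all $k_i\in\mathbb{Z}\cap(0,N)$, $k_1\equiv k_2+k_3+k_4$ mod $N$) the denominator does not vanish. *)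

theory Defs
  imports Complex_Main "HOL-Number_Theory.Cong"
begin

definition omega :: "real \<Rightarrow> real \<Rightarrow> nat \<Rightarrow> int \<Rightarrow> real" where
  "omega \<kappa> m N k = 2 * sqrt (\<kappa> / m) * \<bar>sin (pi * of_int k / real N)\<bar>"

definition iota :: "nat \<Rightarrow> int \<Rightarrow> real" where
  "iota N x = sgn (sin (pi * of_int x / real N))"

definition T4 :: "real \<Rightarrow> real \<Rightarrow> nat \<Rightarrow> int \<Rightarrow> int \<Rightarrow> int \<Rightarrow> int \<Rightarrow> real" where
  "T4 \<kappa> m N k1 k2 k3 k4 =
     - 3 / (4 * \<kappa>^2) * iota N (k2 + k3 + k4) * iota N k2 * iota N k3 * iota N k4
     * (sqrt (omega \<kappa> m N k1) * sqrt (omega \<kappa> m N k2) * sqrt (omega \<kappa> m N k3)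
        * sqrt (omega \<kappa> m N k4))"

definition A1 :: "real \<Rightarrow> real \<Rightarrow> nat \<Rightarrow> int \<Rightarrow> int \<Rightarrow> int \<Rightarrow> int \<Rightarrow> real" where
  "A1 \<kappa> m N k1 k2 k3 k4 =
     - T4 \<kappa> m N k1 k2 k3 k4
     / (omega \<kappa> m N k1 - omega \<kappa> m N k2 - omega \<kappa> m N k3 - omega \<kappa> m N k4)"

end

theory Submission
  imports Defs
begin


lemma trig_id0:
  fixes p q r :: real
  shows "sin (2*(p+q+r)) - sin (2*p) - sin (2*q) - sin (2*r) = - 4 * sin (p+q) * sin (q+r) * sin (p+r)"
  apply (simp only: sin_double cos_double sin_add cos_add distrib_left)
  using sin_cos_squared_add[of p] sin_cos_squared_add[of q] sin_cos_squared_add[of r]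
  by algebra

lemma trig_id:
  fixes b c d :: real
  shows "sin (b + c + d) - sin b - sin c - sin d = - 4 * sin ((b+c)/2) * sin ((c+d)/2) * sin ((b+d)/2)"
  using trig_id0[of "b/2" "c/2" "d/2"] by (simp add: add_divide_distrib)

lemma sin_lb: fixes t :: real assumes "0 \<le> t" "t \<le> 2" shows "t / 3 \<le> sin t"
proof -
  have "\<bar>sin t - (\<Sum>m<3. sin_coeff m * t ^ m)\<bar> \<le> inverse (fact 3) * \<bar>t\<bar> ^ 3"
    by (rule Maclaurin_sin_bound)
  moreover have "(\<Sum>m<3. sin_coeff m * t ^ m) = t"
    by (simp add: numeral_3_eq_3 sin_coeff_def)
  ultimately have "\<bar>sin t - t\<bar> \<le> t^3/6" using assms by (simp add: fact_numeral)
  moreover have "t*t \<le> 4" using assms mult_mono[of t 2 t 2] by auto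
  then have "t^3 \<le> 4 * t" using assms mult_right_mono[of "t*t" 4 t] by (simp add: power3_eq_cube)
  ultimately show ?thesis by (auto simp: abs_if split: if_splits)
qed


lemma j1core:
  fixes u v w :: real
  assumes u: "0<u" "u<pi" and v: "0<v" "v<pi" and w: "0<w" "w<pi" and wu: "w \<le> u" and wv: "w \<le> v"
    and x: "0 < u+v-w" "u+v-w < pi"
  shows "sin(u+v-w) * sin u * sin v * sin w \<le> (sin u + sin v + sin w - sin(u+v-w))^2"
proof -
  define al where "al = u - w"
  define be where "be = v - w"
  define ha where "ha = sin (al/2)"
  define hb where "hb = sin (be/2)"
  define sp where "sp = sin ((u+v)/2)"
  define S where "S = sin w"
  define sx where "sx = sin (u+v-w)"
  define G where "G = sp * ha * hb"
  have D: "sin u + sin v + S - sx = 2*S + 4*G"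
    using trig_id[of u v "-w"] unfolding S_def sx_def G_def sp_def ha_def hb_def al_def be_def
    by (simp add: algebra_simps)
  have ha0: "0 \<le> ha" unfolding ha_def al_def using u w wu by (intro sin_ge_zero) auto
  have hb0: "0 \<le> hb" unfolding hb_def be_def using v w wv by (intro sin_ge_zero) auto
  have sp0: "0 \<le> sp" unfolding sp_def using u v by (intro sin_ge_zero) auto
  have S0: "0 \<le> S" unfolding S_def using w by (intro sin_ge_zero) auto
  have sx0: "0 \<le> sx" unfolding sx_def using x by (intro sin_ge_zero) auto
  have su0: "0 \<le> sin u" using u by (intro sin_ge_zero) auto
  have sv0: "0 \<le> sin v" using v by (intro sin_ge_zero) auto
  have G0: "0 \<le> G" unfolding G_def using ha0 hb0 sp0 by simp
  have S1: "S \<le> 1" and sx1: "sx \<le> 1" unfolding S_def sx_def by auto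
  have sa0: "0 \<le> sin al" unfolding al_def using u w wu by (intro sin_ge_zero) auto
  have sb0: "0 \<le> sin be" unfolding be_def using v w wv by (intro sin_ge_zero) auto
  have sa1: "sin al \<le> 1" and sb1: "sin be \<le> 1" by auto
  have shift: "sin (w + t) \<le> S + sin t" if "0 \<le> sin t" for t
  proof -
    have "sin (w+t) = S * cos t + cos w * sin t" unfolding S_def by (simp add: sin_add)
    also have "\<dots> \<le> S * 1 + 1 * sin t"
      using S0 that by (intro add_mono mult_left_mono mult_right_mono) auto
    finally show ?thesis by simp
  qed
  have su: "sin u \<le> S + sin al" using shift[OF sa0] unfolding al_def by simp
  have sv: "sin v \<le> S + sin be" using shift[OF sb0] unfolding be_def by simp
  have half: "sin t \<le> 2 * sin (t/2)" if "0 \<le> t" "t < pi" for t :: real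
  proof -
    have "sin t = 2 * sin (t/2) * cos (t/2)" using sin_double[of "t/2"] by simp
    also have "\<dots> \<le> 2 * sin (t/2) * 1"
      using that by (intro mult_left_mono) (auto intro!: sin_ge_zero)
    finally show ?thesis by simp
  qed
  have sa: "sin al \<le> 2 * ha" unfolding ha_def using half[of al] al_def u w wu by auto
  have sb: "sin be \<le> 2 * hb" unfolding hb_def using half[of be] be_def v w wv by auto
  have sxsp: "sx \<le> 2 * sp"
  proof -
    define a where "a = (u+v-w)/2"
    define b where "b = w/2"
    have a0: "0 \<le> sin a" "0 \<le> cos a" "sin a \<le> 1" "cos a \<le> 1"
      unfolding a_def using x by (auto intro!: sin_ge_zero cos_ge_zero)
    have b0: "0 \<le> sin b" "0 \<le> cos b"
      unfolding b_def using w by (auto intro!: sin_ge_zero cos_ge_zero)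
    have "(cos b + sin b)^2 = 1 + 2 * sin b * cos b"
      using sin_cos_squared_add[of b] by (simp add: power2_eq_square algebra_simps)
    then have "(cos b + sin b)^2 \<ge> 1^2" using b0 by simp
    then have cb: "cos b + sin b \<ge> 1" using b0 power2_le_imp_le[of 1 "cos b + sin b"] by simp
    have "2*a = u+v-w" unfolding a_def by (simp add: field_simps)
    then have "sx = sin (2*a)" unfolding sx_def by metis
    then have sxe: "sx = 2 * sin a * cos a" using sin_double[of a] by (simp only:)
    have spe: "sp = sin a * cos b + cos a * sin b" unfolding sp_def a_def b_def
      using sin_add[of "(u+v-w)/2" "w/2"] by (simp add: add_divide_distrib diff_divide_distrib)
    have "sin a * cos a * (cos b + sin b) \<le> sin a * cos b + cos a * sin b"
    proof -
      have "sin a * cos a * cos b \<le> sin a * 1 * cos b" using a0 b0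
        by (intro mult_right_mono mult_left_mono) auto
      moreover have "cos a * sin a * sin b \<le> cos a * 1 * sin b" using a0 b0
        by (intro mult_right_mono mult_left_mono) auto
      ultimately show ?thesis by (simp add: algebra_simps)
    qed
    moreover have "sin a * cos a \<le> sin a * cos a * (cos b + sin b)"
      using cb a0 mult_left_mono[of 1 "cos b + sin b" "sin a * cos a"] by simp
    ultimately show ?thesis using sxe spe by linarith
  qed
  have "sx * sin u * sin v * S \<le> sx * (S + sin al) * (S + sin be) * S"
    using su sv sx0 su0 sv0 S0 by (intro mult_right_mono mult_mono mult_left_mono) auto
  also have "\<dots> = sx * S^3 + sx * S^2 * (sin al + sin be) + (sx * sin al * sin be) * S"
    by (simp add: algebra_simps power2_eq_square power3_eq_cube)
  also have "\<dots> \<le> S^2 + 2 * S^2 + (2 * sp * (2*ha) * (2*hb)) * S"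
  proof -
    have "sx * S^3 \<le> 1 * S^3" using sx1 S0 by (intro mult_right_mono) auto
    moreover have "S^3 = S * S^2" by (simp add: power2_eq_square power3_eq_cube)
    moreover have "S * S^2 \<le> 1 * S^2" using S1 by (intro mult_right_mono) auto
    moreover have "sx * S^2 * (sin al + sin be) \<le> 1 * S^2 * 2"
      using sx1 sx0 sa0 sb0 add_mono[OF sa1 sb1] by (intro mult_mono) auto
    moreover have "sx * sin al * sin be \<le> 2 * sp * (2*ha) * (2*hb)"
      using sxsp sa sb sx0 sa0 sb0 by (intro mult_mono) auto
    then have "(sx * sin al * sin be) * S \<le> (2 * sp * (2*ha) * (2*hb)) * S"
      using S0 by (rule mult_right_mono)
    ultimately show ?thesis by linarith
  qed
  also have "\<dots> = 3 * S^2 + 8 * S * G" unfolding G_def by (simp add: algebra_simps)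
  also have "\<dots> \<le> (2*S + 4*G)^2"
    using S0 G0 by (simp add: power2_eq_square algebra_simps)
  finally have fin: "sx * sin u * sin v * S \<le> (2*S + 4*G)^2" .
  have e: "sin u + sin v + sin w - sin(u+v-w) = 2*sin w + 4*G" using D unfolding S_def sx_def .
  show ?thesis unfolding e using fin unfolding S_def sx_def .
qed


lemma j1A:
  fixes a b c :: real
  assumes "0<a" "a<pi" "0<b" "b<pi" "0<c" "c<pi" "pi - c \<le> a" "pi - c \<le> b"
    "0 < a+b+c-pi" "a+b+c-pi < pi"
  shows "sin (a+b+c-pi) * sin a * sin b * sin c \<le> (sin (a+b+c-pi) - sin a - sin b - sin c)^2"
proof -
  have h: "sin(a+b-(pi-c)) * sin a * sin b * sin (pi-c) \<le> (sin a + sin b + sin (pi-c) - sin(a+b-(pi-c)))^2"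
    using assms by (intro j1core) auto
  have e: "a+b-(pi-c) = a+b+c-pi" by simp
  have "(sin a + sin b + sin c - sin(a+b+c-pi))^2 = (sin (a+b+c-pi) - sin a - sin b - sin c)^2"
    by (simp add: power2_eq_square algebra_simps)
  then show ?thesis using h unfolding e by simp
qed

lemma j1B:
  fixes a b c :: real
  assumes "0<a" "a<pi" "0<b" "b<pi" "0<c" "c<pi" "c + a \<le> pi" "c + b \<le> pi"
    "0 < a+b+c-pi" "a+b+c-pi < pi"
  shows "sin (a+b+c-pi) * sin a * sin b * sin c \<le> (sin (a+b+c-pi) - sin a - sin b - sin c)^2"
proof -
  have h: "sin((pi-a)+(pi-b)-c) * sin (pi-a) * sin (pi-b) * sin c \<le> (sin (pi-a) + sin (pi-b) + sin c - sin((pi-a)+(pi-b)-c))^2"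
    using assms by (intro j1core) auto
  have e: "(pi-a)+(pi-b)-c = pi - (a+b+c-pi)" by simp
  have h': "sin (a+b+c-pi) * sin a * sin b * sin c \<le> (sin a + sin b + sin c - sin (a+b+c-pi))^2"
    using h unfolding e sin_pi_minus .
  have "(sin a + sin b + sin c - sin(a+b+c-pi))^2 = (sin (a+b+c-pi) - sin a - sin b - sin c)^2"
    by (simp add: power2_eq_square algebra_simps)
  then show ?thesis using h' by linarith
qed

lemma j1:
  fixes a b c :: real
  assumes "0<a" "a<pi" "0<b" "b<pi" "0<c" "c<pi"
    "0 < a+b+c-pi" "a+b+c-pi < pi"
  shows "sin (a+b+c-pi) * sin a * sin b * sin c \<le> (sin (a+b+c-pi) - sin a - sin b - sin c)^2"
proof -
  have "(pi - c \<le> a \<and> pi - c \<le> b) \<or> (pi - a \<le> b \<and> pi - a \<le> c) \<or> (pi - b \<le> a \<and> pi - b \<le> c)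
     \<or> (c + a \<le> pi \<and> c + b \<le> pi) \<or> (a + b \<le> pi \<and> a + c \<le> pi) \<or> (b + a \<le> pi \<and> b + c \<le> pi)"
    by linarith
  then show ?thesis
  proof (elim disjE)
    assume h: "pi - c \<le> a \<and> pi - c \<le> b"
    show ?thesis using j1A[of a b c] h assms by auto
  next
    assume h: "pi - a \<le> b \<and> pi - a \<le> c"
    have "b+c+a-pi = a+b+c-pi" by simp
    then show ?thesis using j1A[of b c a] h assms by (simp add: algebra_simps)
  next
    assume h: "pi - b \<le> a \<and> pi - b \<le> c"
    have "a+c+b-pi = a+b+c-pi" by simp
    then show ?thesis using j1A[of a c b] h assms by (simp add: algebra_simps)
  next
    assume h: "c + a \<le> pi \<and> c + b \<le> pi"
    show ?thesis using j1B[of a b c] h assms by auto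
  next
    assume h: "a + b \<le> pi \<and> a + c \<le> pi"
    have "b+c+a-pi = a+b+c-pi" by simp
    then show ?thesis using j1B[of b c a] h assms by (simp add: algebra_simps)
  next
    assume h: "b + a \<le> pi \<and> b + c \<le> pi"
    have "a+c+b-pi = a+b+c-pi" by simp
    then show ?thesis using j1B[of a c b] h assms by (simp add: algebra_simps)
  qed
qed

lemma poly_max:
  fixes a b c :: real
  assumes "0<a" "0<b" "0<c" "a \<le> c" "b \<le> c"
  shows "4 * (a+b+c)^3 * (a*b*c) \<le> 27 * ((a+b)*(b+c)*(c+a))^2"
proof -
  have x3: "(a+b+c)^3 \<le> (3*c)^3" using assms by (intro power_mono) auto
  have "(a+b)^2 - 4*a*b = (a-b)^2" by (simp add: power2_eq_square algebra_simps)
  then have ab: "4*a*b \<le> (a+b)^2" using zero_le_power2[of "a-b"] by linarith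
  have "(b+c)*(c+a) = c^2 + (b*c + c*a + b*a)" by (simp add: power2_eq_square algebra_simps)
  moreover have "0 \<le> b*c + c*a + b*a" using assms by simp
  ultimately have c2: "c^2 \<le> (b+c)*(c+a)" by linarith
  have "4 * (a+b+c)^3 * (a*b*c) \<le> 4 * (3*c)^3 * (a*b*c)"
    using x3 assms by (intro mult_right_mono mult_left_mono) auto
  also have "\<dots> = 27 * (4*a*b) * (c^2)^2" by (simp add: power2_eq_square power3_eq_cube algebra_simps)
  also have "\<dots> \<le> 27 * (a+b)^2 * ((b+c)*(c+a))^2"
    using ab c2 assms by (intro mult_mono mult_left_mono power_mono) auto
  also have "\<dots> = 27 * ((a+b)*(b+c)*(c+a))^2" by (simp add: power_mult_distrib)
  finally show ?thesis .
qed

lemma poly_all: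
  fixes a b c :: real
  assumes "0<a" "0<b" "0<c"
  shows "4 * (a+b+c)^3 * (a*b*c) \<le> 27 * ((a+b)*(b+c)*(c+a))^2"
proof -
  have "(a \<le> c \<and> b \<le> c) \<or> (b \<le> a \<and> c \<le> a) \<or> (a \<le> b \<and> c \<le> b)" by linarith
  then show ?thesis
  proof (elim disjE)
    assume "a \<le> c \<and> b \<le> c" then show ?thesis using poly_max[of a b c] assms by auto
  next
    assume "b \<le> a \<and> c \<le> a" then show ?thesis using poly_max[of b c a] assms by (simp add: algebra_simps)
  next
    assume "a \<le> b \<and> c \<le> b" then show ?thesis using poly_max[of c a b] assms by (simp add: algebra_simps)
  qed
qed


lemma j0:
  fixes a b c :: real
  assumes a: "0<a" and b: "0<b" and c: "0<c" and s: "a+b+c < pi"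
  shows "sin(a+b+c) * sin a * sin b * sin c / (sin(a+b+c) - sin a - sin b - sin c)^2 \<le> 19683 / (a+b+c)^2"
proof -
  define x where "x = a+b+c"
  define P where "P = (a+b)*(b+c)*(c+a)"
  have x0: "0 < x" unfolding x_def using assms by simp
  have P0: "0 < P" unfolding P_def using assms by simp
  have p4: "pi < 4" by (rule pi_less_4)
  have qlb: "(y+z)/6 \<le> sin ((y+z)/2)" if "0 < y" "0 < z" "y + z < pi" for y z :: real
    using sin_lb[of "(y+z)/2"] that p4 by simp
  have q1: "(a+b)/6 \<le> sin ((a+b)/2)" using qlb[of a b] assms by simp
  have q2: "(b+c)/6 \<le> sin ((b+c)/2)" using qlb[of b c] assms by simp
  have q3: "(a+c)/6 \<le> sin ((a+c)/2)" using qlb[of a c] assms by simp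
  have D: "sin(a+b+c) - sin a - sin b - sin c = - 4 * (sin ((a+b)/2) * sin ((b+c)/2) * sin ((a+c)/2))"
    using trig_id[of a b c] by simp
  have Q: "P / 216 \<le> sin ((a+b)/2) * sin ((b+c)/2) * sin ((a+c)/2)"
  proof -
    have "(a+b)/6 * ((b+c)/6) * ((a+c)/6) \<le> sin ((a+b)/2) * sin ((b+c)/2) * sin ((a+c)/2)"
      using q1 q2 q3 assms by (intro mult_mono) auto
    moreover have "(a+b)/6 * ((b+c)/6) * ((a+c)/6) = P / 216" unfolding P_def by (simp add: field_simps)
    ultimately show ?thesis by simp
  qed
  have D2: "16 * (P/216)^2 \<le> (sin(a+b+c) - sin a - sin b - sin c)^2"
  proof -
    have "(P/216)^2 \<le> (sin ((a+b)/2) * sin ((b+c)/2) * sin ((a+c)/2))^2"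
      using Q P0 by (intro power_mono) auto
    then show ?thesis unfolding D by (simp add: power_mult_distrib)
  qed
  have N: "sin(a+b+c) * sin a * sin b * sin c \<le> x * a * b * c"
  proof -
    have nn: "0 \<le> sin t" if "0 \<le> t" "t \<le> pi" for t using that by (rule sin_ge_zero)
    show ?thesis unfolding x_def using assms sin_x_le_x[of a] sin_x_le_x[of b] sin_x_le_x[of c] sin_x_le_x[of "a+b+c"]
        nn[of a] nn[of b] nn[of c] nn[of "a+b+c"]
      by (intro mult_mono) auto
  qed
  have N0: "0 \<le> sin(a+b+c) * sin a * sin b * sin c"
    using assms by (intro mult_nonneg_nonneg sin_ge_zero) auto
  have "sin(a+b+c) * sin a * sin b * sin c / (sin(a+b+c) - sin a - sin b - sin c)^2
      \<le> (x*a*b*c) / (16 * (P/216)^2)"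
    using N D2 P0 x0 assms by (intro frac_le) auto
  also have "\<dots> \<le> 19683 / x^2"
  proof -
    have "4 * x^3 * (a*b*c) \<le> 27 * P^2" unfolding x_def P_def using poly_all[of a b c] assms by simp
    then show ?thesis using P0 x0 by (simp add: field_simps power2_eq_square power3_eq_cube)
  qed
  finally show ?thesis unfolding x_def .
qed


lemma Fs_le1:
  fixes p q :: real
  assumes "p \<le> q^2" "0 \<le> p"
  shows "p / q^2 \<le> 1"
proof (cases "q^2 = 0")
  case True then show ?thesis by simp
next
  case False then have "0 < q^2" by simp
  then show ?thesis using assms by (simp add: divide_le_eq_1)
qed

lemma point:
  fixes N :: nat and k1 k2 k3 :: int
  assumes N2: "N \<ge> 2" and k1: "0 < k1" "k1 < int N" and k2: "1 \<le> k2" "k2 \<le> int N - 1"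
    and k3: "1 \<le> k3" "k3 \<le> int N - 1"
  shows "\<bar>sin (pi * of_int k1 / real N)\<bar> * \<bar>sin (pi * of_int k2 / real N)\<bar> * \<bar>sin (pi * of_int k3 / real N)\<bar>
           * \<bar>sin (pi * of_int ((k1-k2-k3) mod int N) / real N)\<bar>
         / (\<bar>sin (pi * of_int k1 / real N)\<bar> - \<bar>sin (pi * of_int k2 / real N)\<bar> - \<bar>sin (pi * of_int k3 / real N)\<bar>
           - \<bar>sin (pi * of_int ((k1-k2-k3) mod int N) / real N)\<bar>)^2
       \<le> 1 + (if k2 < k1 \<and> k3 < k1 then 19683 * (real N)^2 / (pi^2 * (real_of_int k1)^2) else 0)
            + (if k1 < k2 \<and> k1 < k3 then 19683 * (real N)^2 / (pi^2 * (real N - real_of_int k1)^2) else 0)"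
    (is "?F \<le> ?R")
proof -
  define k4 where "k4 = (k1-k2-k3) mod int N"
  define x where "x = (\<lambda>k::int. pi * of_int k / real N)"
  have Npos: "0 < real N" using N2 by simp
  have R1: "1 \<le> ?R" by (simp add: add_nonneg_nonneg)
  have F0: "0 \<le> ?F" by simp
  have k4r: "0 \<le> k4" "k4 < int N" unfolding k4_def using N2 by auto
  have xr: "0 < x k" "x k < pi" if "1 \<le> k" "k \<le> int N - 1" for k
  proof -
    have "0 < real_of_int k" using that by simp
    then show "0 < x k" unfolding x_def using Npos by simp
    have "real_of_int k < real N" using that by linarith
    then have "pi * of_int k < pi * real N" by simp
    then show "x k < pi" unfolding x_def using Npos by (simp add: divide_less_eq)
  qed
  have sx: "\<bar>sin (x k)\<bar> = sin (x k)" if "1 \<le> k" "k \<le> int N - 1" for k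
    using xr[OF that] by (simp add: sin_ge_zero less_imp_le)
  show ?thesis
  proof (cases "k4 = 0")
    case True
    then have "?F = 0" unfolding k4_def[symmetric] by simp
    then show ?thesis using R1 by linarith
  next
    case False
    then have k4b: "1 \<le> k4" "k4 \<le> int N - 1" using k4r by auto
    define j where "j = - ((k1-k2-k3) div int N)"
    have ej: "k2 + k3 + k4 = k1 + int N * j" unfolding k4_def j_def
      using div_mult_mod_eq[of "k1-k2-k3" "int N"] by (simp add: algebra_simps)
    have jnn: "0 \<le> j"
    proof (rule ccontr)
      assume "\<not> 0 \<le> j" then have "j \<le> -1" by simp
      then have "int N * j \<le> int N * (-1)" by (intro mult_left_mono) auto
      then show False using ej k1 k2 k3 k4b by linarith
    qed
    have jle: "j \<le> 2"
    proof (rule ccontr)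
      assume "\<not> j \<le> 2" then have "3 \<le> j" by simp
      then have "int N * 3 \<le> int N * j" by (intro mult_left_mono) auto
      then show False using ej k1 k2 k3 k4b by linarith
    qed
    have exr: "x k2 + x k3 + x k4 = x k1 + pi * of_int j"
    proof -
      have "real_of_int (k2 + k3 + k4) = real_of_int (k1 + int N * j)" using ej by simp
      then have "pi * real_of_int (k2 + k3 + k4) / real N = pi * real_of_int (k1 + int N * j) / real N" by simp
      then show ?thesis unfolding x_def using Npos by (simp add: field_simps)
    qed
    have k1b: "1 \<le> k1" "k1 \<le> int N - 1" using k1 by auto
    have Feq: "?F = sin (x k1) * sin (x k2) * sin (x k3) * sin (x k4) / (sin (x k1) - sin (x k2) - sin (x k3) - sin (x k4))^2"
      unfolding k4_def[symmetric] using sx[OF k1b] sx[OF k2] sx[OF k3] sx[OF k4b] by (simp add: x_def)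
    have "j = 0 \<or> j = 1 \<or> j = 2" using jnn jle by auto
    then show ?thesis
    proof (elim disjE)
      assume jj: "j = 0"
      have e: "x k2 + x k3 + x k4 = x k1" using exr jj by simp
      have "?F \<le> 19683 / (x k1)^2"
        unfolding Feq using j0[of "x k2" "x k3" "x k4"] xr[OF k2] xr[OF k3] xr[OF k4b] xr[OF k1b] e by simp
      also have "\<dots> = 19683 * (real N)^2 / (pi^2 * (real_of_int k1)^2)"
        unfolding x_def using Npos by (simp add: field_simps power2_eq_square)
      finally have b: "?F \<le> 19683 * (real N)^2 / (pi^2 * (real_of_int k1)^2)" .
      have "k2 < k1 \<and> k3 < k1" using ej jj k2 k3 k4b by simp
      then show ?thesis using b by (simp add: add_nonneg_nonneg)
    next
      assume jj: "j = 1"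
      have e: "x k2 + x k3 + x k4 - pi = x k1" using exr jj by simp
      have "sin (x k1) * sin (x k2) * sin (x k3) * sin (x k4) \<le> (sin (x k1) - sin (x k2) - sin (x k3) - sin (x k4))^2"
        using j1[of "x k2" "x k3" "x k4"] xr[OF k2] xr[OF k3] xr[OF k4b] xr[OF k1b] e by simp
      moreover have "0 \<le> sin (x k1) * sin (x k2) * sin (x k3) * sin (x k4)"
        using xr[OF k2] xr[OF k3] xr[OF k4b] xr[OF k1b] by (intro mult_nonneg_nonneg sin_ge_zero) auto
      ultimately have "?F \<le> 1" unfolding Feq by (rule Fs_le1)
      then show ?thesis using R1 by linarith
    next
      assume jj: "j = 2"
      define y where "y = (\<lambda>k. pi - x k)"
      have e: "y k2 + y k3 + y k4 = y k1" using exr jj unfolding y_def by simp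
      have yr: "0 < y k" "y k < pi" if "1 \<le> k" "k \<le> int N - 1" for k
        using xr[OF that] unfolding y_def by auto
      have sy: "sin (y k) = sin (x k)" for k unfolding y_def by simp
      have "?F \<le> 19683 / (y k1)^2"
        unfolding Feq sy[symmetric] using j0[of "y k2" "y k3" "y k4"] yr[OF k2] yr[OF k3] yr[OF k4b] yr[OF k1b] e by simp
      also have "\<dots> = 19683 * (real N)^2 / (pi^2 * (real N - real_of_int k1)^2)"
      proof -
        have yk: "y k1 = pi * (real N - real_of_int k1) / real N" unfolding y_def x_def using Npos by (simp add: field_simps)
        have "real N - real_of_int k1 > 0" using k1 by simp
        then show ?thesis unfolding yk using Npos by (simp add: field_simps power2_eq_square)
      qed
      finally have b: "?F \<le> 19683 * (real N)^2 / (pi^2 * (real N - real_of_int k1)^2)" .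
      have "k1 < k2 \<and> k1 < k3" using ej jj k2 k3 k4b by simp
      then show ?thesis using b by (simp add: add_nonneg_nonneg)
    qed
  qed
qed

lemma gen_bound:
  fixes c0 \<kappa> s1 s2 s3 s4 i0 i2 i3 i4 :: real
  assumes c0: "0 < c0" and ka: "0 < \<kappa>" and s: "0 \<le> s1" "0 \<le> s2" "0 \<le> s3" "0 \<le> s4"
    and i: "\<bar>i0\<bar> \<le> 1" "\<bar>i2\<bar> \<le> 1" "\<bar>i3\<bar> \<le> 1" "\<bar>i4\<bar> \<le> 1"
  shows "(- (- 3 / (4 * \<kappa>^2) * i0 * i2 * i3 * i4 * (sqrt (c0*s1) * sqrt (c0*s2) * sqrt (c0*s3) * sqrt (c0*s4)))
           / (c0*s1 - c0*s2 - c0*s3 - c0*s4))^2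
         \<le> 9 * c0^2 / (16 * \<kappa>^4) * (s1*s2*s3*s4 / (s1-s2-s3-s4)^2)"
proof -
  define I where "I = i0 * i2 * i3 * i4"
  define D where "D = s1 - s2 - s3 - s4"
  have I1: "I^2 \<le> 1"
  proof -
    have "\<bar>I\<bar> \<le> 1" unfolding I_def using i by (simp add: abs_mult mult_le_one)
    then have "\<bar>I\<bar>^2 \<le> 1^2" by (intro power_mono) auto
    then show ?thesis by simp
  qed
  have sq: "(sqrt (c0*s1) * sqrt (c0*s2) * sqrt (c0*s3) * sqrt (c0*s4))^2 = c0^4 * (s1*s2*s3*s4)"
    using c0 s by (simp add: power_mult_distrib mult_nonneg_nonneg algebra_simps power4_eq_xxxx power2_eq_square)
  have den: "c0*s1 - c0*s2 - c0*s3 - c0*s4 = c0 * D" unfolding D_def by (simp add: algebra_simps)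
  have Q0: "0 \<le> s1*s2*s3*s4 / D^2" using s by simp
  have "(- (- 3 / (4 * \<kappa>^2) * i0 * i2 * i3 * i4 * (sqrt (c0*s1) * sqrt (c0*s2) * sqrt (c0*s3) * sqrt (c0*s4)))
           / (c0*s1 - c0*s2 - c0*s3 - c0*s4))^2
      = (9 / (16 * \<kappa>^4)) * I^2 * (sqrt (c0*s1) * sqrt (c0*s2) * sqrt (c0*s3) * sqrt (c0*s4))^2 / (c0^2 * D^2)"
    unfolding den I_def by (simp add: power_divide power_mult_distrib field_simps power2_eq_square power4_eq_xxxx)
  also have "\<dots> = (9 * c0^2 / (16 * \<kappa>^4)) * I^2 * (s1*s2*s3*s4 / D^2)"
    unfolding sq using c0 by (simp add: field_simps power2_eq_square power4_eq_xxxx)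
  also have "\<dots> \<le> (9 * c0^2 / (16 * \<kappa>^4)) * 1 * (s1*s2*s3*s4 / D^2)"
    using I1 Q0 ka by (intro mult_right_mono mult_left_mono) auto
  finally show ?thesis unfolding D_def by simp
qed

lemma iota_le: "\<bar>iota N x\<bar> \<le> 1"
  unfolding iota_def by (simp add: sgn_real_def)

lemma A1_bound:
  fixes \<kappa> m :: real and N :: nat and k1 k2 k3 k4 :: int
  assumes "0 < \<kappa>" "0 < m"
  defines "s \<equiv> \<lambda>k::int. \<bar>sin (pi * of_int k / real N)\<bar>"
  shows "(A1 \<kappa> m N k1 k2 k3 k4)^2 \<le> 9 * (2 * sqrt (\<kappa>/m))^2 / (16 * \<kappa>^4)
            * (s k1 * s k2 * s k3 * s k4 / (s k1 - s k2 - s k3 - s k4)^2)"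
proof -
  have c0: "0 < 2 * sqrt (\<kappa>/m)" using assms by simp
  have om: "omega \<kappa> m N k = 2 * sqrt (\<kappa>/m) * s k" for k unfolding omega_def s_def by simp
  show ?thesis unfolding A1_def T4_def om
    by (rule gen_bound[OF c0 assms(1)]) (auto simp: s_def iota_le)
qed

theorem mainTheorem2:
  fixes \<kappa> m :: real
  assumes "\<kappa> > 0" and "m > 0"
  shows "\<exists>C > 0. \<forall>N::nat. N \<ge> 2 \<longrightarrow> (\<forall>k1::int. 0 < k1 \<and> k1 < int N \<longrightarrow>
    (\<Sum>(k2, k3, k4) \<in> {(k2, k3, k4). k2 \<in> {1..int N - 1} \<and> k3 \<in> {1..int N - 1}
          \<and> k4 \<in> {1..int N - 1} \<and> [k1 - k2 - k3 - k4 = 0] (mod int N)}.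
        (A1 \<kappa> m N k1 k2 k3 k4)^2) \<le> C * (real N)^2)"
proof -
  define K0 where "K0 = 9 * (2 * sqrt (\<kappa>/m))^2 / (16 * \<kappa>^4)"
  have K0: "0 < K0" unfolding K0_def using assms by simp
  define C where "C = K0 * (1 + 2 * (19683 / pi^2))"
  have C0: "0 < C" unfolding C_def using K0 by (simp add: add_pos_nonneg)
  show ?thesis
  proof (intro exI[of _ C] conjI allI impI)
    show "0 < C" by (rule C0)
    fix N :: nat and k1 :: int
    assume N2: "2 \<le> N" and k1: "0 < k1 \<and> k1 < int N"
    have Npos: "0 < real N" using N2 by simp
    define Sq where "Sq = {1..int N - 1} \<times> {1..int N - 1}"
    define f where "f = (\<lambda>p::int\<times>int. (fst p, snd p, (k1 - fst p - snd p) mod int N))"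
    define g where "g = (\<lambda>(k2, k3, k4). (A1 \<kappa> m N k1 k2 k3 k4)^2)"
    define S where "S = {(k2, k3, k4). k2 \<in> {1..int N - 1} \<and> k3 \<in> {1..int N - 1}
          \<and> k4 \<in> {1..int N - 1} \<and> [k1 - k2 - k3 - k4 = 0] (mod int N)}"
    define B1 where "B1 = 19683 * (real N)^2 / (pi^2 * (real_of_int k1)^2)"
    define B2 where "B2 = 19683 * (real N)^2 / (pi^2 * (real N - real_of_int k1)^2)"
    define h where "h = (\<lambda>p::int\<times>int. 1 + (if fst p < k1 \<and> snd p < k1 then B1 else 0)
                                       + (if k1 < fst p \<and> k1 < snd p then B2 else 0))"
    have finSq: "finite Sq" unfolding Sq_def by simp
    have g0: "0 \<le> g t" for t unfolding g_def by (simp add: case_prod_beta)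
    have sub: "S \<subseteq> f ` Sq"
    proof
      fix t assume "t \<in> S"
      then obtain k2 k3 k4 where t: "t = (k2,k3,k4)" and r: "k2 \<in> {1..int N - 1}" "k3 \<in> {1..int N - 1}"
          "k4 \<in> {1..int N - 1}" and c: "[k1 - k2 - k3 - k4 = 0] (mod int N)"
        unfolding S_def by auto
      have "int N dvd (k1 - k2 - k3) - k4" using c by (simp add: cong_iff_dvd_diff)
      then have "(k1 - k2 - k3) mod int N = k4 mod int N" by (simp add: mod_eq_dvd_iff)
      also have "\<dots> = k4" using r by (simp add: mod_pos_pos_trivial)
      finally have "t = f (k2, k3)" unfolding t f_def by simp
      moreover have "(k2,k3) \<in> Sq" unfolding Sq_def using r by simp
      ultimately show "t \<in> f ` Sq" by blast
    qed
    have "sum g S \<le> sum g (f ` Sq)"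
      using sub finSq g0 by (intro sum_mono2) auto
    also have "\<dots> \<le> sum (g \<circ> f) Sq"
      using finSq g0 by (intro sum_image_le) auto
    also have "\<dots> \<le> sum (\<lambda>p. K0 * h p) Sq"
    proof (intro sum_mono)
      fix p assume p: "p \<in> Sq"
      obtain a b where ab: "p = (a,b)" by (cases p)
      have ar: "1 \<le> a" "a \<le> int N - 1" and br: "1 \<le> b" "b \<le> int N - 1" using p ab unfolding Sq_def by auto
      have "(g \<circ> f) p = (A1 \<kappa> m N k1 a b ((k1 - a - b) mod int N))^2"
        unfolding g_def f_def ab by simp
      also have "\<dots> \<le> K0 * (\<bar>sin (pi * of_int k1 / real N)\<bar> * \<bar>sin (pi * of_int a / real N)\<bar> * \<bar>sin (pi * of_int b / real N)\<bar>
           * \<bar>sin (pi * of_int ((k1-a-b) mod int N) / real N)\<bar>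
         / (\<bar>sin (pi * of_int k1 / real N)\<bar> - \<bar>sin (pi * of_int a / real N)\<bar> - \<bar>sin (pi * of_int b / real N)\<bar>
           - \<bar>sin (pi * of_int ((k1-a-b) mod int N) / real N)\<bar>)^2)"
        unfolding K0_def by (rule A1_bound[OF assms])
      also have "\<dots> \<le> K0 * h p"
        unfolding h_def ab B1_def B2_def fst_conv snd_conv
        using point[OF N2 _ _ ar br] k1 K0 by (intro mult_left_mono) auto
      finally show "(g \<circ> f) p \<le> K0 * h p" .
    qed
    also have "\<dots> = K0 * (real (card Sq) + (\<Sum>p\<in>Sq. if fst p < k1 \<and> snd p < k1 then B1 else 0)
                                     + (\<Sum>p\<in>Sq. if k1 < fst p \<and> k1 < snd p then B2 else 0))"
      unfolding h_def by (simp add: sum.distrib sum_distrib_left[symmetric])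
    also have "\<dots> \<le> K0 * ((real N)^2 + 19683 / pi^2 * (real N)^2 + 19683 / pi^2 * (real N)^2)"
    proof -
      have cSq: "real (card Sq) \<le> (real N)^2"
      proof -
        have "card Sq = nat (int N - 1) * nat (int N - 1)" unfolding Sq_def by (simp add: card_cartesian_product)
        also have "\<dots> \<le> N * N" using N2 by (intro mult_mono) auto
        finally have "card Sq \<le> N * N" .
        then have "real (card Sq) \<le> real (N * N)" by linarith
        then show ?thesis by (simp add: power2_eq_square)
      qed
      have s1: "(\<Sum>p\<in>Sq. if fst p < k1 \<and> snd p < k1 then B1 else 0) \<le> 19683 / pi^2 * (real N)^2"
      proof -
        have "(\<Sum>p\<in>Sq. if fst p < k1 \<and> snd p < k1 then B1 else 0) = sum (\<lambda>_. B1) {p\<in>Sq. fst p < k1 \<and> snd p < k1}"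
          using sum.inter_filter[OF finSq, of "\<lambda>_. B1" "\<lambda>p. fst p < k1 \<and> snd p < k1"] by simp
        also have "{p\<in>Sq. fst p < k1 \<and> snd p < k1} = {1..k1-1} \<times> {1..k1-1}"
          unfolding Sq_def using k1 by auto
        also have "sum (\<lambda>_. B1) ({1..k1-1} \<times> {1..k1-1}) = B1 * (real_of_int (k1-1))^2"
          using k1 by (simp add: card_cartesian_product power2_eq_square)
        also have "\<dots> \<le> B1 * (real_of_int k1)^2"
          unfolding B1_def using k1 by (intro mult_left_mono power_mono) auto
        also have "\<dots> = 19683 / pi^2 * (real N)^2"
          unfolding B1_def using k1 by (simp add: field_simps)
        finally show ?thesis .
      qed
      have s2: "(\<Sum>p\<in>Sq. if k1 < fst p \<and> k1 < snd p then B2 else 0) \<le> 19683 / pi^2 * (real N)^2"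
      proof -
        have "(\<Sum>p\<in>Sq. if k1 < fst p \<and> k1 < snd p then B2 else 0) = sum (\<lambda>_. B2) {p\<in>Sq. k1 < fst p \<and> k1 < snd p}"
          using sum.inter_filter[OF finSq, of "\<lambda>_. B2" "\<lambda>p. k1 < fst p \<and> k1 < snd p"] by simp
        also have "{p\<in>Sq. k1 < fst p \<and> k1 < snd p} = {k1+1..int N - 1} \<times> {k1+1..int N - 1}"
          unfolding Sq_def using k1 by auto
        also have "sum (\<lambda>_. B2) ({k1+1..int N - 1} \<times> {k1+1..int N - 1}) = B2 * (real_of_int (int N - 1 - k1))^2"
          using k1 by (simp add: card_cartesian_product power2_eq_square algebra_simps)
        also have "\<dots> \<le> B2 * (real N - real_of_int k1)^2"
          unfolding B2_def using k1 by (intro mult_left_mono power_mono) auto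
        also have "\<dots> = 19683 / pi^2 * (real N)^2"
        proof -
          have "real N - real_of_int k1 \<noteq> 0" using k1 by simp
          then show ?thesis unfolding B2_def by (simp add: field_simps)
        qed
        finally show ?thesis .
      qed
      have "real (card Sq) + (\<Sum>p\<in>Sq. if fst p < k1 \<and> snd p < k1 then B1 else 0)
                                     + (\<Sum>p\<in>Sq. if k1 < fst p \<and> k1 < snd p then B2 else 0)
            \<le> (real N)^2 + 19683 / pi^2 * (real N)^2 + 19683 / pi^2 * (real N)^2"
        using cSq s1 s2 by linarith
      then show ?thesis using K0 by (intro mult_left_mono) auto
    qed
    also have "\<dots> = C * (real N)^2" unfolding C_def by (simp add: algebra_simps)
    finally show "sum g S \<le> C * (real N)^2" .
  qed
qed

end
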